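(* Let $k\geq 2$, $m\geq 3$, and $n\in\mathbb{N}$. There is no $[n,k]_2$ classical code $C$ with encoding function $\mathrm{Enc}:\mathbb{F}_{2^k}\to\mathbb{F}_2^n$ such that the collection $(C^{(h)};\mathrm{Enc}^{(h)})_{h\in[m]}$ with $(C^{(h)};\mathrm{Enc}^{(h)})=(C;\mathrm{Enc})$ for every $h\in[m]$ is $m$-multiplication-friendly.
   Context: $x*y$ is the componentwise product. An encoding function of an $[n,k]_q$ classical (linear) code $C\subseteq\mathbb{F}_q^n$ is an $\mathbb{F}_q$-linear isomorphism $\mathrm{Enc}:\mathbb{F}_{q^k}\to C$. A collection $(C^{(h)};\mathrm{Enc}^{(h)})_{h\in[m]}$ of $[n,k]_q$ codes is $m$-multiplication-friendly if there is an $\mathbb{F}_q$-linear $\mathrm{Dec}:\mathbb{F}_q^n\to\mathbb{F}_{q^k}$ with $z_1\cdots z_m=\mathrm{Dec}(\mathrm{Enc}^{(1)}(z_1)*\cdots*\mathrm{Enc}^{(m)}(z_m))$ for all $z_1,\dots,z_m\in\mathbb{F}_{q^k}$. *)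

theory Defs
  imports Main "HOL-Library.Z2"
begin

text \<open>F_2 is the field type bit. The extension field F_{2^k} is a finite field type 'k with
  CARD('k) = 2^k. The F_2-vector-space structure on it is the action of its prime subfield:\<close>

definition f2_scale :: "bit \<Rightarrow> 'k::field \<Rightarrow> 'k" where
  "f2_scale c x = (if c = 1 then x else 0)"

text \<open>F_2^n is represented by functions nat => bit vanishing at indices >= n.\<close>

definition F2vec :: "nat \<Rightarrow> (nat \<Rightarrow> bit) set" where
  "F2vec n = {v. \<forall>i\<ge>n. v i = 0}"

definition f2_linear_enc :: "nat \<Rightarrow> ('k::field \<Rightarrow> (nat \<Rightarrow> bit)) \<Rightarrow> bool" where
  "f2_linear_enc n Enc \<longleftrightarrow> (\<forall>z. Enc z \<in> F2vec n)
     \<and> (\<forall>x y. Enc (x + y) = (\<lambda>i. Enc x i + Enc y i))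
     \<and> (\<forall>c x. Enc (f2_scale c x) = (\<lambda>i. c * Enc x i))"

definition f2_linear_dec :: "nat \<Rightarrow> ((nat \<Rightarrow> bit) \<Rightarrow> 'k::field) \<Rightarrow> bool" where
  "f2_linear_dec n Dec \<longleftrightarrow>
     (\<forall>u\<in>F2vec n. \<forall>v\<in>F2vec n. Dec (\<lambda>i. u i + v i) = Dec u + Dec v)
     \<and> (\<forall>c. \<forall>u\<in>F2vec n. Dec (\<lambda>i. c * u i) = f2_scale c (Dec u))"

definition is_encoding :: "nat \<Rightarrow> (nat \<Rightarrow> bit) set \<Rightarrow> ('k::field \<Rightarrow> (nat \<Rightarrow> bit)) \<Rightarrow> bool" where
  "is_encoding n C Enc \<longleftrightarrow> C \<subseteq> F2vec n \<and> f2_linear_enc n Enc \<and> bij_betw Enc UNIV C"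

definition mult_friendly_copies :: "nat \<Rightarrow> nat \<Rightarrow> ('k::field \<Rightarrow> (nat \<Rightarrow> bit)) \<Rightarrow> bool" where
  "mult_friendly_copies n m Enc \<longleftrightarrow>
     (\<exists>Dec. f2_linear_dec n Dec \<and>
        (\<forall>z :: nat \<Rightarrow> 'k. (\<Prod>h<m. z h) = Dec (\<lambda>i. \<Prod>h<m. Enc (z h) i)))"

end

theory Submission
  imports Defs
begin

lemma bit_pow_Suc: "(c::bit) ^ Suc r = c"
  by (induction r) (cases c; simp)+

lemma bit_idem: "(c::bit) * c = c"
  by (cases c) simp_all

theorem mainTheorem9:
  fixes k m n :: nat
    and C :: "(nat \<Rightarrow> bit) set"
    and Enc :: "'K::{field,finite} \<Rightarrow> (nat \<Rightarrow> bit)"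
  assumes "k \<ge> 2" and "m \<ge> 3"
    and "card (UNIV :: 'K set) = 2 ^ k"
  shows "\<not> (is_encoding n C Enc \<and> mult_friendly_copies n m Enc)"
proof
  assume "is_encoding n C Enc \<and> mult_friendly_copies n m Enc"
  then obtain Dec where D: "\<And>z :: nat \<Rightarrow> 'K. (\<Prod>h<m. z h) = Dec (\<lambda>i. \<Prod>h<m. Enc (z h) i)"
    unfolding mult_friendly_copies_def by blast
  define r where "r = m - 3"
  have m: "m = Suc (Suc (Suc r))" using assms(2) unfolding r_def by arith
  have sq: "x * x = x" for x :: 'K
  proof -
    let ?z1 = "\<lambda>h::nat. if h < 2 then x else 1"
    let ?z2 = "\<lambda>h::nat. if h = 0 then x else 1"
    have p1: "(\<Prod>h<m. ?z1 h) = x * x"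
      unfolding m by (simp add: prod.lessThan_Suc_shift del: prod.lessThan_Suc)
    have p2: "(\<Prod>h<m. ?z2 h) = x"
      unfolding m by (simp add: prod.lessThan_Suc_shift del: prod.lessThan_Suc)
    have "(\<lambda>i. \<Prod>h<m. Enc (?z1 h) i) = (\<lambda>i. \<Prod>h<m. Enc (?z2 h) i)"
    proof (rule ext)
      fix i
      show "(\<Prod>h<m. Enc (?z1 h) i) = (\<Prod>h<m. Enc (?z2 h) i)"
        unfolding m
        by (cases "Enc x i"; cases "Enc 1 i"; simp add: prod.lessThan_Suc_shift del: prod.lessThan_Suc)
    qed
    then show ?thesis using D[of ?z1] D[of ?z2] p1 p2 by simp
  qed
  have "UNIV \<subseteq> {0, 1 :: 'K}"
  proof
    fix x :: 'K
    have "x * (x - 1) = 0" using sq[of x] by (simp add: algebra_simps)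
    then show "x \<in> {0,1}" by auto
  qed
  then have "card (UNIV :: 'K set) \<le> card {0, 1 :: 'K}"
    by (intro card_mono) auto
  also have "\<dots> \<le> 2" by (simp add: card_insert_if)
  finally have c2: "card (UNIV :: 'K set) \<le> 2" .
  moreover have "(2::nat) ^ 2 \<le> 2 ^ k"
    using assms(1) by (intro power_increasing) auto
  ultimately show False using assms(3) by simp
qed

end
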